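(* Let $\phi_*\in(0,\pi/2)$, $R\ge r=1$, and consider the billiard map on $Q(\phi_*,R)$. Let $x\in M_r$ with $n_1=0$ (exactly one reflection on $\Gamma_R$ between $x_0$ and $x_2$), and let $\tau_0=|p(x_0)p(x_1)|$, $\tau_1=|p(x_1)p(x_2)|$. If $$\frac{2}{d_1}<\frac1{\tau_0}+\frac1{\tau_1},$$ then the orbit segment $(x_0,x_1,x_2)$ is negatively defocusing.
   Context: Setting: $r=1$, $Q(\phi_*,R)=D(O_r,r)\cap D(O_R,R)$ with $|O_rO_R|=\sqrt{R^2-r^2\sin^2\phi_*}-r\cos\phi_*$; its boundary consists of $\Gamma_r$ (a major arc of $\partial D(O_r,r)$, position angles $[\phi_*,2\pi-\phi_*]$) and $\Gamma_R\subset\partial D(O_R,R)$. Phase space $M=M_r\sqcup M_R$, coordinates $(\phi,\theta)$ with $\theta\in(0,\pi)$ the angle from the positive tangent direction; $p(x)$ the base point; $F$ the billiard map. $M_r^{out}=M_r\cap F^{-1}(M_R)$, $M_R^{out}=M_R\cap F^{-1}(M_r)$. For $x\in M_r$: $x_0=F^{n_0}x$ with $n_0=\inf\{n\ge0:F^nx\in M_r^{out}\}$, $x_1=Fx_0$, $n_1=\inf\{n\ge0:F^nx_1\in M_R^{out}\}$, $x_2=F^{n_1+1}x_1$; $d_0=r\sin\theta(x_0)$, $d_1=R\sin\theta(x_1)$, $d_2=r\sin\theta(x_2)$. Derivative: $D_xF=\frac1{d(Fx)}\begin{bmatrix}\tau-d(x)&\tau\\ \tau-d(x)-d(Fx)&\tau-d(Fx)\end{bmatrix}$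 with $d(x)=\rho\sin\theta$ ($\rho$ the radius of the arc of $p(x)$), $\tau=|p(x)p(Fx)|$. A segment $(F^kx)_{m\le k\le n}$ is negatively defocusing if all four entries of $D_{F^mx}F^{n-m}$ in $(\phi,\theta)$ coordinates are negative. *)

theory Defs
  imports "HOL-Analysis.Analysis"
begin

text \<open>O_r = 0 and O_R lies on the negative real
  axis at distance |O_r O_R| = sqrt(R^2 - sin^2 phi_*) - cos phi_*, so that
  Gamma_r is the arc of the unit circle with position angles [phi_*, 2 pi - phi_*]
  and Gamma_R is the arc of the circle of radius R around O_R with position
  angles (-psi_*, psi_*), psi_* = arcsin(sin phi_* / R).\<close>

datatype side = Sr | SR

text \<open>A phase point: (arc, position angle phi, angle theta from the positive tangent).\<close>
type_synonym phase = "side \<times> real \<times> real"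

definition dist_OO :: "real \<Rightarrow> real \<Rightarrow> real" where
  "dist_OO phis R = sqrt (R\<^sup>2 - (sin phis)\<^sup>2) - cos phis"

definition center :: "real \<Rightarrow> real \<Rightarrow> side \<Rightarrow> complex" where
  "center phis R s = (case s of Sr \<Rightarrow> 0 | SR \<Rightarrow> - complex_of_real (dist_OO phis R))"

definition radius :: "real \<Rightarrow> side \<Rightarrow> real" where
  "radius R s = (case s of Sr \<Rightarrow> 1 | SR \<Rightarrow> R)"

definition table :: "real \<Rightarrow> real \<Rightarrow> complex set" where
  "table phis R = cball (center phis R Sr) 1 \<inter> cball (center phis R SR) R"

definition psi_star :: "real \<Rightarrow> real \<Rightarrow> real" where
  "psi_star phis R = arcsin (sin phis / R)"

definition Mr :: "real \<Rightarrow> phase set" where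
  "Mr phis = {(Sr, phi, th) | phi th. phis \<le> phi \<and> phi \<le> 2 * pi - phis \<and> 0 < th \<and> th < pi}"

definition MR :: "real \<Rightarrow> real \<Rightarrow> phase set" where
  "MR phis R = {(SR, psi, th) | psi th. - psi_star phis R < psi \<and> psi < psi_star phis R
                                        \<and> 0 < th \<and> th < pi}"

text \<open>Base point p(x) and outgoing unit velocity (positive tangent = counterclockwise).\<close>
definition pos :: "real \<Rightarrow> real \<Rightarrow> phase \<Rightarrow> complex" where
  "pos phis R x = center phis R (fst x) + complex_of_real (radius R (fst x)) * cis (fst (snd x))"

definition vel :: "phase \<Rightarrow> complex" where
  "vel x = cis (fst (snd x) + pi / 2 + snd (snd x))"

definition flight :: "real \<Rightarrow> real \<Rightarrow> phase \<Rightarrow> real" where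
  "flight phis R x = Sup {t. 0 \<le> t \<and> pos phis R x + complex_of_real t * vel x \<in> table phis R}"

definition hitpt :: "real \<Rightarrow> real \<Rightarrow> phase \<Rightarrow> complex" where
  "hitpt phis R x = pos phis R x + complex_of_real (flight phis R x) * vel x"

definition angle_r :: "complex \<Rightarrow> real" where
  "angle_r q = (if Arg q < 0 then Arg q + 2 * pi else Arg q)"

text \<open>The billiard map F: fly to the next boundary point, then reflect
  (outgoing angle from the positive tangent = minus the angle of the incoming velocity).\<close>
definition Fb :: "real \<Rightarrow> real \<Rightarrow> phase \<Rightarrow> phase" where
  "Fb phis R x =
     (let q = hitpt phis R x in
      if cmod q = 1 \<and> phis \<le> angle_r q \<and> angle_r q \<le> 2 * pi - phis
      then (Sr, angle_r q, - Arg (vel x / cis (angle_r q + pi / 2)))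
      else (let a = Arg (q - center phis R SR) in
            (SR, a, - Arg (vel x / cis (a + pi / 2)))))"

definition Mr_out :: "real \<Rightarrow> real \<Rightarrow> phase set" where
  "Mr_out phis R = Mr phis \<inter> Fb phis R -` MR phis R"

definition MR_out :: "real \<Rightarrow> real \<Rightarrow> phase set" where
  "MR_out phis R = MR phis R \<inter> Fb phis R -` Mr phis"

definition dd :: "real \<Rightarrow> phase \<Rightarrow> real" where
  "dd R x = radius R (fst x) * sin (snd (snd x))"

text \<open>Derivative D_xF in (phi,theta) coordinates, as given by the stated formula.\<close>
definition DF :: "real \<Rightarrow> real \<Rightarrow> phase \<Rightarrow> real^2^2" where
  "DF phis R x =
     (let y = Fb phis R x; tau = cmod (pos phis R x - pos phis R y); d = dd R x; d' = dd R y in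
      (\<chi> i j. (1 / d') *
         (if i = 1 then (if j = 1 then tau - d else tau)
          else (if j = 1 then tau - d - d' else tau - d'))))"

fun DFn :: "real \<Rightarrow> real \<Rightarrow> phase \<Rightarrow> nat \<Rightarrow> real^2^2" where
  "DFn phis R x 0 = mat 1"
| "DFn phis R x (Suc n) = DF phis R ((Fb phis R ^^ n) x) ** DFn phis R x n"

definition neg_defocusing :: "real \<Rightarrow> real \<Rightarrow> phase \<Rightarrow> nat \<Rightarrow> nat \<Rightarrow> bool" where
  "neg_defocusing phis R x m n =
     (\<forall>i j. DFn phis R ((Fb phis R ^^ m) x) (n - m) $ i $ j < 0)"

end

theory Submission
  imports Defs
begin


lemma D_facts:
  assumes "0 < phis" "phis < pi/2" "1 \<le> R"
  shows "0 \<le> dist_OO phis R" "dist_OO phis R < R"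
    "(dist_OO phis R)^2 + 2*dist_OO phis R*cos phis + 1 = R^2"
proof -
  have s: "0 < sin phis" using assms by (intro sin_gt_zero) auto
  have c: "0 < cos phis" using assms by (intro cos_gt_zero) auto
  have sc: "(sin phis)^2 + (cos phis)^2 = 1" by simp
  have s1: "(sin phis)^2 \<le> 1" using sc c by (smt (verit) zero_le_power2)
  have R2: "1 \<le> R^2" using assms by (smt (verit) one_le_power)
  have nn: "0 \<le> R^2 - (sin phis)^2" using s1 R2 by simp
  have "sqrt (R^2 - (sin phis)^2) \<ge> sqrt ((cos phis)^2)"
    by (intro real_sqrt_le_mono) (use sc R2 in linarith)
  hence "sqrt (R^2 - (sin phis)^2) \<ge> cos phis" using c by simp
  thus "0 \<le> dist_OO phis R" unfolding dist_OO_def by simp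
  have "sqrt (R^2 - (sin phis)^2) < sqrt (R^2)" using s by (intro real_sqrt_less_mono) simp
  hence "sqrt (R^2 - (sin phis)^2) < R" using assms by simp
  thus "dist_OO phis R < R" unfolding dist_OO_def using c by simp
  have "(dist_OO phis R + cos phis)^2 = R^2 - (sin phis)^2" unfolding dist_OO_def using nn by simp
  hence "(dist_OO phis R)^2 + (cos phis)^2 + 2*dist_OO phis R*cos phis = R^2 - (sin phis)^2"
    by (simp add: power2_sum)
  thus "(dist_OO phis R)^2 + 2*dist_OO phis R*cos phis + 1 = R^2"
    using sc by linarith
qed

lemma cos_range1:
  assumes "0 < phis" "phis < pi/2" "phis \<le> p" "p \<le> 2*pi - phis"
  shows "cos p \<le> cos phis"
proof (cases "p \<le> pi")
  case True thus ?thesis using assms by (intro cos_monotone_0_pi_le) auto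
next
  case False
  have "cos p = cos (2*pi - p)" by (simp add: cos_diff)
  also have "\<dots> \<le> cos phis" using assms False by (intro cos_monotone_0_pi_le) auto
  finally show ?thesis .
qed

lemma cos_range2:
  assumes "0 < phis" "phis < pi/2" "0 \<le> p" "p < 2*pi" "cos p \<le> cos phis"
  shows "phis \<le> p \<and> p \<le> 2*pi - phis"
proof (rule ccontr)
  assume "\<not> ?thesis"
  then consider "p < phis" | "p > 2*pi - phis" by linarith
  then show False
  proof cases
    case 1
    then have "cos phis < cos p" using assms by (intro cos_monotone_0_pi) auto
    thus False using assms by simp
  next
    case 2
    have "cos p = cos (2*pi - p)" by (simp add: cos_diff)
    also have "cos phis < cos (2*pi - p)" using assms 2 by (intro cos_monotone_0_pi) auto
    finally show False using assms by simp
  qed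
qed

lemma angle_r_props:
  assumes "q \<noteq> 0"
  shows "0 \<le> angle_r q" "angle_r q < 2*pi" "cis (angle_r q) = sgn q"
proof -
  have b: "- pi < Arg q" "Arg q \<le> pi" using Arg_bounded by auto
  show "0 \<le> angle_r q" "angle_r q < 2*pi" unfolding angle_r_def using b by auto
  have "cis (Arg q + 2*pi) = cis (Arg q)" by (simp add: cis_mult[symmetric])
  thus "cis (angle_r q) = sgn q" unfolding angle_r_def using cis_Arg[OF assms] by auto
qed

lemma table_iff:
  "z \<in> table phis R \<longleftrightarrow> cmod z \<le> 1 \<and> cmod (z - center phis R SR) \<le> R"
proof -
  have "dist (center phis R SR) z = cmod (z - center phis R SR)" by (metis dist_commute dist_norm)
  moreover have "dist (center phis R Sr) z = cmod z" by (simp add: center_def)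
  ultimately show ?thesis unfolding table_def mem_cball by simp
qed

lemma table_bound:
  assumes "z \<in> table phis R"
  shows "cmod z \<le> 1"
  using assms unfolding table_def center_def by (auto simp: dist_norm)

lemma flight_props:
  assumes P: "P \<in> table phis R" and v: "cmod v = 1"
  defines "S \<equiv> {t. 0 \<le> t \<and> P + complex_of_real t * v \<in> table phis R}"
  shows "0 \<le> Sup S" "P + complex_of_real (Sup S) * v \<in> table phis R"
    "cmod (P + complex_of_real (Sup S) * v) = 1 \<or>
     cmod (P + complex_of_real (Sup S) * v - center phis R SR) = R"
proof -
  have bdd: "bdd_above S"
  proof
    fix t assume "t \<in> S"
    then have t0: "0 \<le> t" and "cmod (P + complex_of_real t * v) \<le> 1"
      using table_bound unfolding S_def by auto
    moreover have "cmod (complex_of_real t * v) \<le> cmod (P + complex_of_real t * v) + cmod P"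
      using norm_triangle_ineq4[of "P + complex_of_real t * v" P] by simp
    ultimately show "t \<le> 1 + cmod P" using v t0 by (simp add: norm_mult)
  qed
  have ne: "0 \<in> S" using P unfolding S_def by simp
  have cl: "closed S"
  proof -
    have "closed (table phis R)" unfolding table_def by (intro closed_Int closed_cball)
    then have "closed ((\<lambda>t. P + complex_of_real t * v) -` table phis R)"
      by (rule continuous_closed_vimage) (intro continuous_intros)
    moreover have "S = {0..} \<inter> ((\<lambda>t. P + complex_of_real t * v) -` table phis R)"
      unfolding S_def by auto
    ultimately show ?thesis using closed_atLeast by (metis closed_Int)
  qed
  show "0 \<le> Sup S" using ne bdd by (rule cSup_upper)
  have "Sup S \<in> S" using closed_contains_Sup[OF _ bdd cl] ne by blast
  thus q: "P + complex_of_real (Sup S) * v \<in> table phis R" unfolding S_def by simp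
  show "cmod (P + complex_of_real (Sup S) * v) = 1 \<or>
     cmod (P + complex_of_real (Sup S) * v - center phis R SR) = R"
  proof (rule ccontr)
    define q where "q = P + complex_of_real (Sup S) * v"
    assume "\<not> ?thesis"
    hence n: "cmod q \<noteq> 1" "cmod (q - center phis R SR) \<noteq> R" unfolding q_def by auto
    have q1: "cmod q \<le> 1" "cmod (q - center phis R SR) \<le> R"
      using q unfolding q_def table_iff by auto
    define e where "e = min (1 - cmod q) (R - cmod (q - center phis R SR))"
    have e: "0 < e" using n q1 unfolding e_def by auto
    have "cmod (q + complex_of_real e * v) \<le> cmod q + e"
      using norm_triangle_ineq[of q "complex_of_real e * v"] v e by (simp add: norm_mult)
    moreover have "cmod (q + complex_of_real e * v - center phis R SR) \<le> cmod (q - center phis R SR) + e"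
      using norm_triangle_ineq[of "q - center phis R SR" "complex_of_real e * v"] v e
      by (simp add: norm_mult algebra_simps)
    ultimately have "q + complex_of_real e * v \<in> table phis R"
      unfolding table_iff e_def by auto
    moreover have "q + complex_of_real e * v = P + complex_of_real (Sup S + e) * v"
      unfolding q_def by (simp add: algebra_simps)
    moreover have mem: "\<And>t. t \<in> S \<longleftrightarrow> 0 \<le> t \<and> P + complex_of_real t * v \<in> table phis R"
      unfolding S_def by simp
    ultimately have "Sup S + e \<in> S" using \<open>0 \<le> Sup S\<close> e by simp
    hence "Sup S + e \<le> Sup S" using bdd by (rule cSup_upper)
    thus False using e by simp
  qed
qed



lemma cmod_plus_real_sq: "(cmod (z + complex_of_real D))^2 = (cmod z)^2 + 2*D*Re z + D^2"
  by (simp add: cmod_power2 power2_sum algebra_simps)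

lemma cis_sgn_unit: assumes "cmod z = 1" shows "cis (Arg z) = z"
proof -
  have "z \<noteq> 0" using assms by auto
  thus ?thesis using cis_Arg[of z] assms by (simp add: sgn_div_norm)
qed

lemma alg:
  fixes d0 d1 d2 u w :: real
  assumes d0: "0 < d0" and d1: "0 < d1" and d2: "0 < d2" and u: "0 \<le> u" and w: "0 \<le> w"
    and s: "d0 + d2 < u + w" and h: "2 / d1 < 1/u + 1/w"
  shows "(w-d1)*(u-d0) + w*(u-d0-d1) < 0"
    and "(w-d1)*u + w*(u-d1) < 0"
    and "(w-d1-d2)*(u-d0) + (w-d2)*(u-d0-d1) < 0"
    and "(w-d1-d2)*u + (w-d2)*(u-d1) < 0"
proof -
  have H: "2*u*w < d1*(u+w)"
  proof (cases "u = 0 \<or> w = 0")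
    case True
    then show ?thesis
    proof
      assume u0: "u = 0"
      then have "2/d1 < 1/w" using h by simp
      then have "w > 0" using d1 w by (cases "w = 0") (auto simp: field_simps)
      thus ?thesis using u0 d1 by simp
    next
      assume w0: "w = 0"
      then have "2/d1 < 1/u" using h by simp
      then have "u > 0" using d1 u by (cases "u = 0") (auto simp: field_simps)
      thus ?thesis using w0 d1 by simp
    qed
  next
    case False
    then have "u > 0" "w > 0" using u w by auto
    then show ?thesis using h d1 by (simp add: field_simps)
  qed
  define al where "al = 2*u - 2*d0 - d1"
  define be where "be = 2*w - 2*d2 - d1"
  have X: "(al + 2*d0)*(be+2*d2) < d1^2" using H unfolding al_def be_def by (simp add: algebra_simps power2_eq_square)
  have sab: "al + be > - 2*d1" using s unfolding al_def be_def by simp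
  have e1: "(w-d1)*(u-d0) + w*(u-d0-d1) = (al*(be+2*d2) - d1^2)/2" unfolding al_def be_def by (simp add: algebra_simps power2_eq_square)
  have e2: "(w-d1)*u + w*(u-d1) = ((al + 2*d0)*(be+2*d2) - d1^2)/2" unfolding al_def be_def by (simp add: algebra_simps power2_eq_square)
  have e3: "(w-d1-d2)*(u-d0) + (w-d2)*(u-d0-d1) = (al*be - d1^2)/2" unfolding al_def be_def by (simp add: algebra_simps power2_eq_square)
  have e4: "(w-d1-d2)*u + (w-d2)*(u-d1) = ((al+2*d0)*be - d1^2)/2" unfolding al_def be_def by (simp add: algebra_simps power2_eq_square)
  have g1: "al*(be+2*d2) < d1^2"
  proof (cases "al \<le> 0")
    case True
    show ?thesis
    proof (cases "be + 2*d2 \<ge> 0")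
      case True thus ?thesis using mult_nonpos_nonneg[of al "be+2*d2"] \<open>al \<le> 0\<close> d1 by (simp add: order_le_less_trans)
    next
      case False
      then have wl: "2*w < d1" unfolding be_def by simp
      have "-al < 2*d1 + be" using sab by simp
      have "(-al)*(-(be+2*d2)) < (2*d1+be)*(-(be+2*d2))"
        using \<open>-al < 2*d1 + be\<close> False by (intro mult_strict_right_mono) auto
      also have "\<dots> \<le> d1^2"
      proof -
        have "2*w*(d2-w) \<le> 2*w*d2" using w by (simp add: algebra_simps)
        also have "\<dots> \<le> d1*d2" using wl d2 by (intro mult_right_mono) auto
        finally have "2*w*(d2-w) \<le> d1*d2" .
        thus ?thesis unfolding be_def by (simp add: algebra_simps power2_eq_square)
      qed
      finally show ?thesis by (simp add: algebra_simps)
    qed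
  next
    case False
    show ?thesis
    proof (cases "be + 2*d2 \<ge> 0")
      case True
      have "al*(be+2*d2) \<le> (al+2*d0)*(be+2*d2)" using True d0 by (intro mult_right_mono) auto
      thus ?thesis using X by simp
    next
      case False2: False
      thus ?thesis using False mult_pos_neg[of al "be+2*d2"] d1 by (simp add: order_less_trans)
    qed
  qed
  have g2: "(al+2*d0)*be < d1^2"
  proof (cases "be \<le> 0")
    case True
    show ?thesis
    proof (cases "al + 2*d0 \<ge> 0")
      case True thus ?thesis using mult_nonneg_nonpos[of "al+2*d0" be] \<open>be \<le> 0\<close> d1 by (simp add: order_le_less_trans)
    next
      case False
      then have ul: "2*u < d1" unfolding al_def by simp
      have "-be < 2*d1 + al" using sab by simp
      have "(-(al+2*d0))*(-be) < (-(al+2*d0))*(2*d1+al)"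
        using \<open>-be < 2*d1 + al\<close> False by (intro mult_strict_left_mono) auto
      also have "\<dots> \<le> d1^2"
      proof -
        have "2*u*(d0-u) \<le> 2*u*d0" using u by (simp add: algebra_simps)
        also have "\<dots> \<le> d1*d0" using ul d0 by (intro mult_right_mono) auto
        finally have "2*u*(d0-u) \<le> d1*d0" .
        thus ?thesis unfolding al_def by (simp add: algebra_simps power2_eq_square)
      qed
      finally show ?thesis by (simp add: algebra_simps)
    qed
  next
    case False
    show ?thesis
    proof (cases "al + 2*d0 \<ge> 0")
      case True
      have "(al+2*d0)*be \<le> (al+2*d0)*(be+2*d2)" using True d2 by (intro mult_left_mono) auto
      thus ?thesis using X by simp
    next
      case False2: False
      thus ?thesis using False mult_neg_pos[of "al+2*d0" be] d1 by (simp add: order_less_trans)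
    qed
  qed
  have g3: "al*be < d1^2"
  proof (cases "al \<ge> 0 \<and> be \<ge> 0")
    case True
    have "al*be \<le> (al+2*d0)*be" using True d0 by (intro mult_right_mono) auto
    thus ?thesis using g2 by simp
  next
    case False
    show ?thesis
    proof (cases "al \<le> 0 \<and> be \<le> 0")
      case True
      have "0 \<le> (al - be)^2" by simp
      hence "4*(al*be) \<le> (al+be)^2" by (simp add: algebra_simps power2_eq_square)
      also have "(al+be)^2 < (2*d1)^2"
      proof -
        have "(-(al+be))^2 < (2*d1)^2" using True sab by (intro power_strict_mono) auto
        thus ?thesis by (simp add: power2_eq_square algebra_simps)
      qed
      finally show ?thesis by (simp add: power2_eq_square)
    next
      case False2: False
      with False have "al*be \<le> 0" by (metis mult_nonneg_nonpos mult_nonpos_nonneg nle_le)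
      thus ?thesis using d1 by (simp add: order_le_less_trans)
    qed
  qed
  show "(w-d1)*(u-d0) + w*(u-d0-d1) < 0" using e1 g1 by simp
  show "(w-d1)*u + w*(u-d1) < 0" using e2 X by simp
  show "(w-d1-d2)*(u-d0) + (w-d2)*(u-d0-d1) < 0" using e3 g3 by simp
  show "(w-d1-d2)*u + (w-d2)*(u-d1) < 0" using e4 g2 by simp
qed

lemma Re_cis_cnj: "Re (cis x * cnj (cis y)) = cos (x - y)"
  by (simp add: cis_cnj cis_mult)

lemma ent: fixes A B C E d1 d2 :: real
  assumes "A*B + C*E < 0" "0<d1" "0<d2"
  shows "1/d2*A*(1/d1*B) + 1/d2*C*(1/d1*E) < 0"
proof -
  have "1/d2*A*(1/d1*B) + 1/d2*C*(1/d1*E) = (A*B+C*E)/(d1*d2)" using assms by (simp add: field_simps)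
  thus ?thesis using assms by (simp add: divide_neg_pos)
qed

theorem mainTheorem7:
  fixes phis R :: real and x :: phase
  assumes "0 < phis" and "phis < pi / 2" and "1 \<le> R"
    and "x \<in> Mr phis"
    and "\<exists>n. (Fb phis R ^^ n) x \<in> Mr_out phis R"
    and "n0 = (LEAST n. (Fb phis R ^^ n) x \<in> Mr_out phis R)"
    and "x0 = (Fb phis R ^^ n0) x" and "x1 = Fb phis R x0" and "x2 = Fb phis R x1"
    and "(LEAST n. (Fb phis R ^^ n) x1 \<in> MR_out phis R) = 0"
    and "\<exists>n. (Fb phis R ^^ n) x1 \<in> MR_out phis R"
    and "tau0 = cmod (pos phis R x0 - pos phis R x1)"
    and "tau1 = cmod (pos phis R x1 - pos phis R x2)"
    and "d1 = R * sin (snd (snd x1))"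
    and "2 / d1 < 1 / tau0 + 1 / tau1"
  shows "neg_defocusing phis R x n0 (n0 + 2)"
proof -
  define D where "D = dist_OO phis R"
  define OR where "OR = center phis R SR"
  have OR: "OR = - complex_of_real D" unfolding OR_def D_def center_def by simp
  have D0: "0 \<le> D" and DR: "D < R" and DRe: "D^2 + 2*D*cos phis + 1 = R^2"
    using D_facts[OF assms(1,2,3)] unfolding D_def by auto
  have x0out: "x0 \<in> Mr_out phis R" using LeastI_ex[OF assms(5)] assms(6,7) by simp
  have x1out: "x1 \<in> MR_out phis R" using LeastI_ex[OF assms(11)] assms(10) by simp
  have x0M: "x0 \<in> Mr phis" and x1M: "x1 \<in> MR phis R" using x0out assms(8) unfolding Mr_out_def by auto
  have x2M: "x2 \<in> Mr phis" using x1out assms(9) unfolding MR_out_def by auto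
  obtain p0 th0 where x0eq: "x0 = (Sr, p0, th0)" and p0: "phis \<le> p0" "p0 \<le> 2*pi - phis"
    and th0: "0 < th0" "th0 < pi" using x0M unfolding Mr_def by auto
  obtain a th1 where x1eq: "x1 = (SR, a, th1)" and th1: "0 < th1" "th1 < pi"
    using x1M unfolding MR_def by auto
  obtain b th2 where x2eq: "x2 = (Sr, b, th2)" and th2: "0 < th2" "th2 < pi"
    using x2M unfolding Mr_def by auto
  define P0 where "P0 = pos phis R x0"
  define v0 where "v0 = vel x0"
  have P0: "P0 = cis p0" unfolding P0_def by (simp add: pos_def x0eq center_def radius_def)
  have v0: "v0 = cis (p0 + pi/2 + th0)" unfolding v0_def by (simp add: vel_def x0eq)
  have v0n: "cmod v0 = 1" using v0 by simp
  have P0T: "P0 \<in> table phis R"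
  proof -
    have "cos p0 \<le> cos phis" using cos_range1[OF assms(1,2) p0] .
    hence "D * cos p0 \<le> D * cos phis" using D0 by (rule mult_left_mono)
    hence "(cmod (P0 + complex_of_real D))^2 \<le> R^2"
      unfolding cmod_plus_real_sq P0 using DRe by simp
    moreover have "0 \<le> R" using assms(3) by simp
    ultimately have "cmod (P0 + complex_of_real D) \<le> R" by (rule power2_le_imp_le)
    thus ?thesis unfolding table_iff OR_def[symmetric] OR using P0 by simp
  qed
  define t0 where "t0 = flight phis R x0"
  define q where "q = hitpt phis R x0"
  have t0S: "t0 = Sup {t. 0 \<le> t \<and> P0 + complex_of_real t * v0 \<in> table phis R}"
    unfolding t0_def flight_def P0_def v0_def ..
  have q: "q = P0 + complex_of_real t0 * v0" unfolding q_def hitpt_def t0_def P0_def v0_def ..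
  note F0 = flight_props[OF P0T v0n, folded t0S, folded q, folded OR_def]
  have fl0: "0 \<le> t0" "q \<in> table phis R" "cmod q = 1 \<or> cmod (q - OR) = R"
    using F0 by blast+
  have Fx0: "x1 = (if cmod q = 1 \<and> phis \<le> angle_r q \<and> angle_r q \<le> 2 * pi - phis
      then (Sr, angle_r q, - Arg (v0 / cis (angle_r q + pi / 2)))
      else (SR, Arg (q - OR), - Arg (v0 / cis (Arg (q - OR) + pi / 2))))"
    unfolding assms(8) Fb_def Let_def q_def v0_def OR_def by simp
  have ncond: "\<not> (cmod q = 1 \<and> phis \<le> angle_r q \<and> angle_r q \<le> 2 * pi - phis)"
    using Fx0 x1eq by (auto split: if_splits)
  hence aeq: "a = Arg (q - OR)" and th1eq: "th1 = - Arg (v0 / cis (a + pi / 2))"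
    using Fx0 x1eq by auto
  have qR: "cmod (q - OR) = R"
  proof (rule ccontr)
    assume ne: "cmod (q - OR) \<noteq> R"
    hence q1: "cmod q = 1" using fl0(3) by auto
    have qle: "cmod (q + complex_of_real D) \<le> R" using fl0(2) unfolding table_iff OR_def[symmetric] OR by simp
    have "D \<noteq> 0"
    proof
      assume "D = 0"
      hence "R = 1" using DRe assms(3) by (simp add: power2_eq_1_iff)
      thus False using ne q1 \<open>D = 0\<close> OR by simp
    qed
    hence Dp: "0 < D" using D0 by simp
    have "(cmod (q + complex_of_real D))^2 \<le> R^2" using qle by (simp add: power_mono)
    hence "1 + 2*D*Re q + D^2 \<le> R^2" unfolding cmod_plus_real_sq q1 by simp
    hence "D * Re q \<le> D * cos phis" using DRe by simp
    hence Req: "Re q \<le> cos phis" using Dp by simp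
    have qn0: "q \<noteq> 0" using q1 by auto
    have "cis (angle_r q) = q" using angle_r_props(3)[OF qn0] q1 by (simp add: sgn_div_norm)
    hence "cos (angle_r q) = Re q" by (metis cis.sel(1))
    hence "phis \<le> angle_r q \<and> angle_r q \<le> 2 * pi - phis"
      using cos_range2[OF assms(1,2) angle_r_props(1,2)[OF qn0]] Req by simp
    thus False using ncond q1 by simp
  qed
  have Rp: "0 < R" using assms(3) by simp
  have cisa: "complex_of_real R * cis a = q - OR"
  proof -
    have "q - OR \<noteq> 0" using qR Rp by auto
    hence "cis a = (q - OR) / complex_of_real R" using cis_Arg[of "q - OR"] aeq qR Rp by (simp add: sgn_div_norm scaleR_conv_of_real field_simps)
    thus ?thesis using Rp by simp
  qed
  have pos1: "pos phis R x1 = q" using cisa unfolding pos_def x1eq radius_def OR_def by (simp add: algebra_simps)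
  have v0a: "v0 = cis (a + pi/2 - th1)"
  proof -
    define z where "z = v0 / cis (a + pi / 2)"
    have "cmod z = 1" unfolding z_def using v0n by (simp add: norm_divide)
    hence "cis (- th1) = z" using cis_sgn_unit th1eq z_def by simp
    hence "v0 = cis (- th1) * cis (a + pi/2)" unfolding z_def by simp
    thus ?thesis by (simp add: cis_mult)
  qed
  define v1 where "v1 = vel x1"
  have v1: "v1 = cis (a + pi/2 + th1)" unfolding v1_def by (simp add: vel_def x1eq)
  have v1n: "cmod v1 = 1" using v1 by simp
  define t1 where "t1 = flight phis R x1"
  define q' where "q' = hitpt phis R x1"
  have t1S: "t1 = Sup {t. 0 \<le> t \<and> q + complex_of_real t * v1 \<in> table phis R}"
    unfolding t1_def flight_def pos1 v1_def ..
  have fl1: "0 \<le> t1" using flight_props(1)[OF fl0(2) v1n, folded t1S] .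
  have q': "q' = q + complex_of_real t1 * v1" unfolding q'_def hitpt_def t1_def pos1 v1_def ..
  have Fx1: "x2 = (if cmod q' = 1 \<and> phis \<le> angle_r q' \<and> angle_r q' \<le> 2 * pi - phis
      then (Sr, angle_r q', - Arg (v1 / cis (angle_r q' + pi / 2)))
      else (SR, Arg (q' - OR), - Arg (v1 / cis (Arg (q' - OR) + pi / 2))))"
    unfolding assms(9) Fb_def Let_def q'_def v1_def OR_def by simp
  have cond1: "cmod q' = 1 \<and> phis \<le> angle_r q' \<and> angle_r q' \<le> 2 * pi - phis"
    using Fx1 x2eq by (auto split: if_splits)
  hence beq: "b = angle_r q'" and th2eq: "th2 = - Arg (v1 / cis (b + pi / 2))"
    using Fx1 x2eq by auto
  have q'n: "cmod q' = 1" using cond1 by simp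
  have cisb: "cis b = q'"
  proof -
    have qn0: "q' \<noteq> 0" using q'n by auto
    show ?thesis using angle_r_props(3)[OF qn0] q'n beq by (simp add: sgn_div_norm)
  qed
  have pos2: "pos phis R x2 = q'" unfolding pos_def x2eq radius_def center_def using cisb by simp
  have v1b: "v1 = cis (b + pi/2 - th2)"
  proof -
    define z where "z = v1 / cis (b + pi / 2)"
    have "cmod z = 1" unfolding z_def using v1n by (simp add: norm_divide)
    hence "cis (- th2) = z" using cis_sgn_unit th2eq z_def by simp
    hence "v1 = cis (- th2) * cis (b + pi/2)" unfolding z_def by simp
    thus ?thesis by (simp add: cis_mult)
  qed
  have tau0: "tau0 = t0" unfolding assms(12) P0_def[symmetric] pos1 q using fl0(1) v0n by (simp add: norm_mult)
  have tau1: "tau1 = t1" unfolding assms(13) pos1 pos2 q' using fl1 v1n by (simp add: norm_mult)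
  define d0 where "d0 = sin th0"
  define d2 where "d2 = sin th2"
  have d0p: "0 < d0" unfolding d0_def using th0 by (simp add: sin_gt_zero)
  have d2p: "0 < d2" unfolding d2_def using th2 by (simp add: sin_gt_zero)
  have d1p: "0 < d1" unfolding assms(14) x1eq using th1 Rp by (simp add: sin_gt_zero)
  have E1: "Re (P0 * cnj v0) = - d0" unfolding P0 v0 Re_cis_cnj d0_def by (simp add: cos_add cos_diff)
  have E2: "Re (q' * cnj v1) = d2" unfolding cisb[symmetric] v1b Re_cis_cnj d2_def by (simp add: cos_diff cos_add)
  have vv0: "v0 * cnj v0 = 1" unfolding v0 by (simp add: cis_cnj cis_mult)
  have vv1: "v1 * cnj v1 = 1" unfolding v1 by (simp add: cis_cnj cis_mult)
  have E1': "Re (P0 * cnj v0) = Re (q * cnj v0) - t0"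
  proof -
    have "P0 * cnj v0 = q * cnj v0 - complex_of_real t0 * (v0 * cnj v0)" unfolding q by (simp add: algebra_simps)
    thus ?thesis using vv0 by simp
  qed
  have E2': "Re (q' * cnj v1) = Re (q * cnj v1) + t1"
  proof -
    have "q' * cnj v1 = q * cnj v1 + complex_of_real t1 * (v1 * cnj v1)" unfolding q' by (simp add: algebra_simps)
    thus ?thesis using vv1 by simp
  qed
  have qa: "q = complex_of_real R * cis a - complex_of_real D" using cisa OR by simp
  have K: "Re (q * cnj v0) - Re (q * cnj v1) = 2 * sin th1 * (R - D * cos a)"
    unfolding qa v0a v1 apply (simp add: cis_cnj cis_mult cos_add sin_add cos_diff sin_diff algebra_simps)
    using sin_cos_squared_add3[of a] by algebra
  have "D * cos a \<le> D * 1" using D0 by (intro mult_left_mono) auto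
  hence "0 < R - D * cos a" using DR by simp
  moreover have "0 < sin th1" using th1 by (simp add: sin_gt_zero)
  ultimately have "0 < 2 * sin th1 * (R - D * cos a)" by simp
  hence key: "d0 + d2 < tau0 + tau1" using K E1 E2 E1' E2' tau0 tau1 by simp
  have u: "0 \<le> tau0" and w: "0 \<le> tau1" using assms(12,13) by simp_all
  note A = alg[OF d0p d1p d2p u w key assms(15)]
  have dd0: "dd R x0 = d0" by (simp add: dd_def x0eq radius_def d0_def)
  have dd1: "dd R x1 = d1" using assms(14) by (simp add: dd_def x1eq radius_def)
  have dd2: "dd R x2 = d2" by (simp add: dd_def x2eq radius_def d2_def)
  have DF0: "DF phis R x0 = (\<chi> i j. (1/d1) * (if i = 1 then (if j = 1 then tau0 - d0 else tau0) else (if j = 1 then tau0 - d0 - d1 else tau0 - d1)))"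
  proof -
    have a1: "cmod (pos phis R x0 - pos phis R (Fb phis R x0)) = tau0" using assms(8,12) by simp
    have a2: "dd R (Fb phis R x0) = d1" using dd1 assms(8) by simp
    show ?thesis unfolding DF_def Let_def a1 a2 dd0 ..
  qed
  have DF1: "DF phis R x1 = (\<chi> i j. (1/d2) * (if i = 1 then (if j = 1 then tau1 - d1 else tau1) else (if j = 1 then tau1 - d1 - d2 else tau1 - d2)))"
  proof -
    have a1: "cmod (pos phis R x1 - pos phis R (Fb phis R x1)) = tau1" using assms(9,13) by simp
    have a2: "dd R (Fb phis R x1) = d2" using dd2 assms(9) by simp
    show ?thesis unfolding DF_def Let_def a1 a2 dd1 ..
  qed
  have DFn2: "DFn phis R x0 2 = DF phis R x1 ** DF phis R x0"
    by (simp add: numeral_2_eq_2 assms(8)[symmetric])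
  have n2: "n0 + 2 - n0 = 2" by simp
  show ?thesis
    unfolding neg_defocusing_def n2 assms(7)[symmetric] DFn2 forall_2
    unfolding matrix_matrix_mult_def DF0 DF1
    using ent[OF A(1) d1p d2p] ent[OF A(2) d1p d2p] ent[OF A(3) d1p d2p] ent[OF A(4) d1p d2p]
    by (simp add: sum_2)
qed
end
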